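(* Let $c\ge0$, $d>0$, $\beta>0$, and let $\Delta_{q_\beta}$ denote the discriminant (in $\mu$) of $q_\beta(\mu):=\mu^4+2d\mu^3+(2c+d^2)\mu^2+d(\beta/2+2c)\mu+c(\beta+c)$, regarded as a function of $d$. Then: (i) For $\beta<4c$, $\Delta_{q_\beta}=0$ has a unique non-negative solution $d_1\in(0,2\sqrt{c})$; set $d_2=d_3=\infty$. (ii) For $4c\le\beta<8c$, $\Delta_{q_\beta}=0$ has the three non-negative solutions $d_1\in(0,2\sqrt{c})$, $d_2\in(2\sqrt{c},2\sqrt{\beta}]$ and $d_3\in[2\sqrt{\beta},\infty)$. (iii) For $\beta\ge8c>0$, $\Delta_{q_\beta}=0$ has two non-negative solutions $d_1\in(0,2\sqrt{c})$, $d_2\in(2\sqrt{c},2\sqrt{\beta}]$; set $d_3=\infty$. (iv) For $c=0$, $\Delta_{q_\beta}=0$ has two non-negative solutions $d_1=0$ and $d_2=\sqrt{27\beta/8}$; set $d_3=\infty$. (v) The polynomial $q_\beta$ has no real roots if $d<d_1$ and four real roots if $d_2\le d\le d_3$; in all other cases $q_\beta$ has two real roots. *)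

theory Defs
  imports "HOL-Analysis.Analysis" "HOL-Computational_Algebra.Polynomial"
begin

text \<open>Discriminant of the quartic a x^4 + b x^3 + c x^2 + d x + e (standard formula,
  equal to a^6 times the product of the squared differences of the complex roots).\<close>
definition quartic_disc :: "real \<Rightarrow> real \<Rightarrow> real \<Rightarrow> real \<Rightarrow> real \<Rightarrow> real" where
  "quartic_disc a b c d e =
     256*a^3*e^3 - 192*a^2*b*d*e^2 - 128*a^2*c^2*e^2 + 144*a^2*c*d^2*e - 27*a^2*d^4
   + 144*a*b^2*c*e^2 - 6*a*b^2*d^2*e - 80*a*b*c^2*d*e + 18*a*b*c*d^3 + 16*a*c^4*e
   - 4*a*c^3*d^2 - 27*b^4*e^2 + 18*b^3*c*d*e - 4*b^3*d^3 - 4*b^2*c^3*e + b^2*c^2*d^2"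

definition qbeta :: "real \<Rightarrow> real \<Rightarrow> real \<Rightarrow> real poly" where
  "qbeta \<beta> c d = [: c*(\<beta>+c), d*(\<beta>/2 + 2*c), 2*c + d^2, 2*d, 1 :]"

definition disc_qbeta :: "real \<Rightarrow> real \<Rightarrow> real \<Rightarrow> real" where
  "disc_qbeta \<beta> c d = quartic_disc 1 (2*d) (2*c + d^2) (d*(\<beta>/2 + 2*c)) (c*(\<beta>+c))"

definition num_real_roots :: "real poly \<Rightarrow> nat" where
  "num_real_roots p = (\<Sum>x\<in>{x. poly p x = 0}. order x p)"

end

theory Submission
  imports Defs
begin

lemma nrr_mult:
  fixes p q :: "real poly"
  assumes "p \<noteq> 0" "q \<noteq> 0"
  shows "num_real_roots (p*q) = num_real_roots p + num_real_roots q"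
proof -
  let ?Rp = "{x. poly p x = 0}" and ?Rq = "{x. poly q x = 0}"
  have fp: "finite ?Rp" using assms(1) by (rule poly_roots_finite)
  have fq: "finite ?Rq" using assms(2) by (rule poly_roots_finite)
  have pq: "p*q \<noteq> 0" using assms by simp
  have R: "{x. poly (p*q) x = 0} = ?Rp \<union> ?Rq" by auto
  have "num_real_roots (p*q) = (\<Sum>x\<in>?Rp \<union> ?Rq. order x p + order x q)"
    unfolding num_real_roots_def R using order_mult[OF pq] by simp
  also have "\<dots> = (\<Sum>x\<in>?Rp \<union> ?Rq. order x p) + (\<Sum>x\<in>?Rp \<union> ?Rq. order x q)"
    by (simp add: sum.distrib)
  also have "(\<Sum>x\<in>?Rp \<union> ?Rq. order x p) = (\<Sum>x\<in>?Rp. order x p)"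
    by (rule sum.mono_neutral_right) (use fp fq order_root in auto)
  also have "(\<Sum>x\<in>?Rp \<union> ?Rq. order x q) = (\<Sum>x\<in>?Rq. order x q)"
    by (rule sum.mono_neutral_right) (use fp fq order_root in auto)
  finally show ?thesis unfolding num_real_roots_def .
qed

lemma nrr_lin: "num_real_roots [:-a, 1::real:] = 1"
proof -
  have "{x. poly [:-a, 1::real:] x = 0} = {a}" by auto
  moreover have "order a [:-a, 1::real:] = 1" using order_power_n_n[of a 1] by simp
  ultimately show ?thesis unfolding num_real_roots_def by simp
qed

lemma nrr_none: "(\<And>x. poly p x \<noteq> (0::real)) \<Longrightarrow> num_real_roots p = 0"
  unfolding num_real_roots_def by simp

lemma nrr_quad:
  fixes p r :: real
  shows "num_real_roots [:r, p, 1:] = (if p^2 - 4*r \<ge> 0 then 2 else 0)"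
proof (cases "p^2 - 4*r \<ge> 0")
  case True
  define s where "s = sqrt (p^2 - 4*r)"
  have s2: "s^2 = p^2 - 4*r" unfolding s_def using True by simp
  define x1 where "x1 = (-p + s)/2"
  define x2 where "x2 = (-p - s)/2"
  have eq: "[:r, p, 1:] = [:-x1, 1:] * [:-x2, 1:]"
    unfolding x1_def x2_def using s2 by (simp add: field_simps power2_eq_square)
  have "num_real_roots [:r, p, 1:] = 2"
    by (subst eq, subst nrr_mult) (simp_all add: nrr_lin)
  then show ?thesis using True by simp
next
  case False
  have "poly [:r, p, 1:] x \<noteq> 0" for x
  proof -
    have "poly [:r, p, 1:] x = (x + p/2)^2 + (4*r - p^2)/4"
      by (simp add: field_simps power2_eq_square)
    moreover have "(x + p/2)^2 \<ge> 0" by simp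
    moreover have "(4*r - p^2)/4 > 0" using False by simp
    ultimately show ?thesis by linarith
  qed
  then show ?thesis using False by (simp add: nrr_none)
qed

lemma disc_prod:
  fixes p r p' r' :: real
  shows "quartic_disc 1 (p+p') (r+r'+p*p') (p*r'+p'*r) (r*r') =
    (p^2-4*r)*(p'^2-4*r')*((r-r')^2 + (p-p')*(p*r'-p'*r))^2"
  unfolding quartic_disc_def by (simp only: power_one mult_1 mult_1_right) algebra

lemma disc_P:
  fixes c \<beta> d :: real
  shows "disc_qbeta \<beta> c d = \<beta>^2 * ((\<beta>/2-4*c)*(d^2)^3 + (48*c^2+12*c*\<beta>-27*\<beta>^2/16)*(d^2)^2
     - (192*c^3+120*c^2*\<beta>)*d^2 + 256*c^3*(c+\<beta>))"
  unfolding disc_qbeta_def quartic_disc_def apply (simp only: power_one mult_1 mult_1_right)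
  apply (simp add: field_simps) by algebra

lemma quad_nonpos_disc:
  fixes x p r :: real
  assumes "x^2 + p*x + r \<le> 0" shows "p^2 - 4*r \<ge> 0"
proof -
  have "(2*x+p)^2 = p^2 - 4*r + 4*(x^2+p*x+r)" by (simp add: algebra_simps power2_eq_square)
  moreover have "(2*x+p)^2 \<ge> 0" by simp
  ultimately show ?thesis using assms by (smt (verit))
qed

lemma quad_neg_disc:
  fixes x p r :: real
  assumes "x^2 + p*x + r < 0" shows "p^2 - 4*r > 0"
proof -
  have "(2*x+p)^2 = p^2 - 4*r + 4*(x^2+p*x+r)" by (simp add: algebra_simps power2_eq_square)
  moreover have "(2*x+p)^2 \<ge> 0" by simp
  ultimately show ?thesis using assms by (smt (verit))
qed

lemma common_root:
  fixes p r p' r' :: real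
  assumes "(r-r')^2 + (p-p')*(p*r'-p'*r) = 0" "p \<noteq> p'"
  defines "x0 \<equiv> (r'-r)/(p-p')"
  shows "x0^2 + p*x0 + r = 0" "x0^2 + p'*x0 + r' = 0"
proof -
  have ne: "p - p' \<noteq> 0" using assms by simp
  have h: "x0*(p-p') = r'-r" unfolding x0_def using ne by simp
  have "(p-p')^2 * (x0^2 + p*x0 + r) = (x0*(p-p'))^2 + p*(p-p')*(x0*(p-p')) + r*(p-p')^2"
    by algebra
  also have "\<dots> = (r'-r)^2 + p*(p-p')*(r'-r) + r*(p-p')^2" by (simp only: h)
  also have "\<dots> = (r-r')^2 + (p-p')*(p*r'-p'*r)" by algebra
  finally have "(p-p')^2 * (x0^2 + p*x0 + r) = (r-r')^2 + (p-p')*(p*r'-p'*r)" .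
  then show 1: "x0^2 + p*x0 + r = 0" using assms ne by simp
  have "(p-p')*x0 = r' - r" unfolding x0_def using ne by simp
  then show "x0^2 + p'*x0 + r' = 0" using 1 by (simp add: algebra_simps)
qed

lemma qbeta_factor:
  fixes \<beta> c d :: real
  assumes "\<beta> > 0" "c \<ge> 0" "d > 0"
  shows "\<exists>p r p' r'. qbeta \<beta> c d = [:r,p,1:]*[:r',p',1:] \<and> p+p' = 2*d \<and> r+r'+p*p' = 2*c+d^2
     \<and> p*r'+p'*r = d*(\<beta>/2+2*c) \<and> r*r' = c*(\<beta>+c)"
proof -
  define F where "F l = 8*l*(l^2+2*l*c-\<beta>*c) - d^2*(2*l-\<beta>/2)^2" for l
  define M where "M = 2 + \<beta>*c + d^2 + d^2*\<beta>^2"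
  have M1: "M \<ge> 1" unfolding M_def using assms by (simp add: add_nonneg_nonneg)
  have F0: "F 0 < 0" unfolding F_def using assms by simp
  have FM: "F M > 0"
  proof -
    have "F M = 8*M^3 + 16*c*M^2 - 8*\<beta>*c*M - 4*d^2*M^2 + 2*\<beta>*d^2*M - d^2*\<beta>^2/4"
      unfolding F_def by (simp add: algebra_simps power2_eq_square power3_eq_cube)
    moreover have "16*c*M^2 \<ge> 0" "2*\<beta>*d^2*M \<ge> 0" using assms M1 by simp_all
    moreover have "8*\<beta>*c*M \<le> 8*\<beta>*c*M^2" using assms M1
      by (simp add: power2_eq_square mult_left_mono)
    moreover have "d^2*\<beta>^2/4 \<le> d^2*\<beta>^2*M^2" using assms M1
    proof -
      have "M^2 \<ge> 1" using M1 by (simp add: one_le_power)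
      then have a: "d^2*\<beta>^2 \<le> d^2*\<beta>^2*M^2" using mult_left_mono[of 1 "M^2" "d^2*\<beta>^2"] by simp
      have b: "d^2*\<beta>^2/4 \<le> d^2*\<beta>^2" by simp
      from a b show ?thesis by linarith
    qed
    moreover have "M^2 * (8*M - 8*\<beta>*c - 4*d^2 - d^2*\<beta>^2) > 0"
    proof (intro mult_pos_pos)
      show "M^2 > 0" using M1 by simp
      have "0 \<le> d^2" "0 \<le> d^2*\<beta>^2" by simp_all
      then show "8*M - 8*\<beta>*c - 4*d^2 - d^2*\<beta>^2 > 0" unfolding M_def by (simp add: algebra_simps add_pos_nonneg)
    qed
    ultimately show ?thesis by (simp add: algebra_simps power2_eq_square power3_eq_cube)
  qed
  have cont: "continuous_on {0..M} F" unfolding F_def by (intro continuous_intros)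
  obtain l where l: "0 \<le> l" "l \<le> M" "F l = 0"
    using IVT'[of F 0 0 M, OF less_imp_le[OF F0] less_imp_le[OF FM] _ cont] M1 by auto
  have lpos: "l > 0" using l F0 by (cases "l = 0") auto
  define \<sigma> where "\<sigma> = sqrt (2*l)"
  have s2: "\<sigma>^2 = 2*l" unfolding \<sigma>_def using lpos by simp
  define k where "k = (2*l*d - \<beta>*d/2)/(4*l)"
  have k2: "2*l*k^2 = 2*l*c + l^2 - \<beta>*c"
  proof -
    have "2*l*k^2 = (2*l*d - \<beta>*d/2)^2/(8*l)" unfolding k_def using lpos
      by (simp add: field_simps power2_eq_square)
    also have "(2*l*d - \<beta>*d/2)^2 = 8*l*(l^2+2*l*c-\<beta>*c)"
      using l(3) unfolding F_def by (simp add: algebra_simps power2_eq_square)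
    finally show ?thesis using lpos by (simp add: power2_eq_square)
  qed
  define p where "p = d - \<sigma>"
  define p' where "p' = d + \<sigma>"
  define r where "r = c + l - \<sigma>*k"
  define r' where "r' = c + l + \<sigma>*k"
  have e1: "p+p' = 2*d" unfolding p_def p'_def by simp
  have e2: "r+r'+p*p' = 2*c+d^2" unfolding p_def p'_def r_def r'_def
    using s2 by (simp add: algebra_simps power2_eq_square)
  have e3: "p*r'+p'*r = d*(\<beta>/2+2*c)"
  proof -
    have "p*r'+p'*r = 2*d*(c+l) - 2*\<sigma>^2*k" unfolding p_def p'_def r_def r'_def
      by (simp add: algebra_simps power2_eq_square)
    also have "\<dots> = 2*d*(c+l) - 4*l*k" using s2 by simp
    also have "\<dots> = d*(\<beta>/2+2*c)" unfolding k_def using lpos by (simp add: field_simps)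
    finally show ?thesis .
  qed
  have e4: "r*r' = c*(\<beta>+c)"
  proof -
    have "r*r' = (c+l)^2 - \<sigma>^2*k^2" unfolding r_def r'_def
      by (simp add: algebra_simps power2_eq_square)
    also have "\<dots> = (c+l)^2 - 2*l*k^2" using s2 by simp
    also have "\<dots> = c*(\<beta>+c)" using k2 by (simp add: algebra_simps power2_eq_square)
    finally show ?thesis .
  qed
  have "qbeta \<beta> c d = [:r,p,1:]*[:r',p',1:]"
  proof -
    have "[:r,p,1:]*[:r',p',1:] = [: r*r', p*r'+p'*r, r+r'+p*p', p+p', 1 :]"
      by (simp add: algebra_simps)
    also have "\<dots> = qbeta \<beta> c d" unfolding qbeta_def e1 e2 e3 e4 by (simp add: mult.commute)
    finally show ?thesis by simp
  qed
  with e1 e2 e3 e4 show ?thesis by blast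
qed

lemma poly_qbeta: "poly (qbeta \<beta> c d) x = (x^2+d*x+c)^2 + \<beta>/2*(d*x+2*c)"
  unfolding qbeta_def by (simp add: algebra_simps power2_eq_square power3_eq_cube)

lemma count_main:
  fixes \<beta> c d :: real
  assumes b: "\<beta> > 0" and c: "c \<ge> 0" and d: "d > 0"
  shows "(d^2 < 4*c \<longrightarrow> (num_real_roots (qbeta \<beta> c d) = 0 \<and> disc_qbeta \<beta> c d > 0)
             \<or> (num_real_roots (qbeta \<beta> c d) = 2 \<and> disc_qbeta \<beta> c d \<le> 0))
       \<and> (d^2 \<ge> 4*c \<longrightarrow> (num_real_roots (qbeta \<beta> c d) = 4 \<and> disc_qbeta \<beta> c d \<ge> 0)
             \<or> (num_real_roots (qbeta \<beta> c d) = 2 \<and> disc_qbeta \<beta> c d < 0))"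
proof -
  obtain p r p' r' where fac: "qbeta \<beta> c d = [:r,p,1:]*[:r',p',1:]" and e1: "p+p' = 2*d"
    and e2: "r+r'+p*p' = 2*c+d^2" and e3: "p*r'+p'*r = d*(\<beta>/2+2*c)" and e4: "r*r' = c*(\<beta>+c)"
    using qbeta_factor[OF b c d] by blast
  define DA where "DA = p^2-4*r"
  define DB where "DB = p'^2-4*r'"
  define R where "R = (r-r')^2 + (p-p')*(p*r'-p'*r)"
  have disc: "disc_qbeta \<beta> c d = DA*DB*R^2"
  proof -
    have "disc_qbeta \<beta> c d = quartic_disc 1 (p+p') (r+r'+p*p') (p*r'+p'*r) (r*r')"
      unfolding disc_qbeta_def e1 e2 e3 e4 ..
    then show ?thesis unfolding DA_def DB_def R_def disc_prod .
  qed
  have cnt: "num_real_roots (qbeta \<beta> c d) = (if DA \<ge> 0 then 2 else 0) + (if DB \<ge> 0 then 2 else 0)"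
    unfolding fac DA_def DB_def by (subst nrr_mult) (simp_all add: nrr_quad)
  have pq: "poly (qbeta \<beta> c d) x = (x^2+p*x+r)*(x^2+p'*x+r')" for x
    unfolding fac by (simp add: algebra_simps power2_eq_square)
  have four: "4*c \<le> d^2" if "DA \<ge> 0" "DB \<ge> 0"
  proof -
    have "(p-p')^2 \<ge> 0" by simp
    have "(p+p')^2 = 4*d^2" unfolding e1 by (simp add: power2_eq_square)
    then have "d^2 = (p^2+2*p*p'+p'^2)/4" by (simp add: power2_eq_square algebra_simps)
    then show ?thesis using that e2 \<open>(p-p')^2 \<ge> 0\<close> unfolding DA_def DB_def
      by (simp add: power2_eq_square algebra_simps)
  qed
  have pos_of_neg: "x^2+p*x+r > 0" if "DA < 0" for x
    using quad_nonpos_disc[of x p r] that unfolding DA_def by linarith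
  have pos_of_neg': "x^2+p'*x+r' > 0" if "DB < 0" for x
    using quad_nonpos_disc[of x p' r'] that unfolding DB_def by linarith
  have Rnz_neg: "R \<noteq> 0" if "DA < 0" "DB < 0"
  proof
    assume R0: "R = 0"
    show False
    proof (cases "p = p'")
      case True
      then have "(r-r')^2 = 0" using R0 unfolding R_def by simp
      then have "r = r'" by simp
      have "p = d" using e1 True by simp
      then have "r = c" using e2 \<open>r = r'\<close> True by (simp add: power2_eq_square)
      then have "2*d*c = d*(\<beta>/2+2*c)" using e3 \<open>r = r'\<close> True \<open>p = d\<close> by simp
      then have "d*\<beta> = 0" by (simp add: algebra_simps)
      then show False using b d by simp
    next
      case False
      then show False using common_root(1)[of r r' p p'] R0 pos_of_neg[OF that(1)] unfolding R_def
        by (metis less_irrefl)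
    qed
  qed
  have Rnz_mix: "DA > 0 \<and> R \<noteq> 0" if "DB < 0" "poly (qbeta \<beta> c d) x < 0" for x
  proof -
    have "x^2+p'*x+r' > 0" using pos_of_neg' that(1) by blast
    then have "x^2+p*x+r < 0" using that(2) unfolding pq by (simp add: mult_less_0_iff)
    then have DA: "DA > 0" using quad_neg_disc unfolding DA_def by blast
    have "R \<noteq> 0"
    proof
      assume R0: "R = 0"
      show False
      proof (cases "p = p'")
        case True
        then have "(r-r')^2 = 0" using R0 unfolding R_def by simp
        then have "r = r'" by simp
        then show False using DA that(1) True unfolding DA_def DB_def by simp
      next
        case False
        then show False using common_root(2)[of r r' p p'] R0 pos_of_neg'[OF that(1)] unfolding R_def
          by (metis less_irrefl)
      qed
    qed
    with DA show ?thesis by simp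
  qed
  have Rnz_mix': "DB > 0 \<and> R \<noteq> 0" if "DA < 0" "poly (qbeta \<beta> c d) x < 0" for x
  proof -
    have "x^2+p*x+r > 0" using pos_of_neg that(1) by blast
    then have "x^2+p'*x+r' < 0" using that(2) unfolding pq by (simp add: mult_less_0_iff)
    then have DB: "DB > 0" using quad_neg_disc unfolding DB_def by blast
    have "R \<noteq> 0"
    proof
      assume R0: "R = 0"
      show False
      proof (cases "p = p'")
        case True
        then have "(r-r')^2 = 0" using R0 unfolding R_def by simp
        then have "r = r'" by simp
        then show False using DB that(1) True unfolding DA_def DB_def by simp
      next
        case False
        then show False using common_root(1)[of r r' p p'] R0 pos_of_neg[OF that(1)] unfolding R_def
          by (metis less_irrefl)
      qed
    qed
    with DB show ?thesis by simp
  qed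
  have part1: "(num_real_roots (qbeta \<beta> c d) = 0 \<and> disc_qbeta \<beta> c d > 0)
             \<or> (num_real_roots (qbeta \<beta> c d) = 2 \<and> disc_qbeta \<beta> c d \<le> 0)" if "d^2 < 4*c"
  proof (cases "DA \<ge> 0")
    case True
    then have "DB < 0" using four that by force
    then have "DA*DB \<le> 0" using True by (simp add: mult_nonneg_nonpos)
    then have "disc_qbeta \<beta> c d \<le> 0" unfolding disc by (simp add: mult_nonpos_nonneg)
    then show ?thesis using cnt True \<open>DB < 0\<close> by simp
  next
    case False
    show ?thesis
    proof (cases "DB \<ge> 0")
      case True
      then have "DA*DB \<le> 0" using False by (simp add: mult_nonpos_nonneg)
      then have "disc_qbeta \<beta> c d \<le> 0" unfolding disc by (simp add: mult_nonpos_nonneg)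
      then show ?thesis using cnt True False by simp
    next
      case F2: False
      have "R \<noteq> 0" using Rnz_neg False F2 by simp
      then have "disc_qbeta \<beta> c d > 0" unfolding disc using False F2
        by (simp add: mult_neg_neg)
      then show ?thesis using cnt False F2 by simp
    qed
  qed
  have part2: "(num_real_roots (qbeta \<beta> c d) = 4 \<and> disc_qbeta \<beta> c d \<ge> 0)
             \<or> (num_real_roots (qbeta \<beta> c d) = 2 \<and> disc_qbeta \<beta> c d < 0)" if "d^2 \<ge> 4*c"
  proof -
    have ex: "\<exists>x. poly (qbeta \<beta> c d) x \<le> 0"
    proof (cases "d^2 = 4*c")
      case True
      have "poly (qbeta \<beta> c d) (-d/2) = 0" unfolding poly_qbeta using True
        by (simp add: field_simps power2_eq_square)
      then show ?thesis by (intro exI[of _ "-d/2"]) simp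
    next
      case False
      then have gt: "d^2 > 4*c" using that by simp
      define t where "t = sqrt (d^2-4*c)"
      have t2: "t^2 = d^2 - 4*c" unfolding t_def using less_imp_le[OF gt] by simp
      have t0: "t \<ge> 0" unfolding t_def using less_imp_le[OF gt] by simp
      define x where "x = (-d-t)/2"
      have s0: "x^2+d*x+c = 0" unfolding x_def using t2 by (simp add: field_simps power2_eq_square)
      have "d*x+2*c < 0" unfolding x_def using gt mult_nonneg_nonneg[OF less_imp_le[OF d] t0]
        by (simp add: field_simps power2_eq_square)
      then have "poly (qbeta \<beta> c d) x < 0" unfolding poly_qbeta s0 using b
        by (simp add: mult_pos_neg)
      then show ?thesis by (intro exI[of _ x]) simp
    qed
    then obtain x where x: "poly (qbeta \<beta> c d) x \<le> 0" by blast
    have "x^2+p*x+r \<le> 0 \<or> x^2+p'*x+r' \<le> 0" using x unfolding pq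
      by (metis mult_pos_pos not_le)
    then have some: "DA \<ge> 0 \<or> DB \<ge> 0" unfolding DA_def DB_def using quad_nonpos_disc by blast
    show ?thesis
    proof (cases "DA \<ge> 0 \<and> DB \<ge> 0")
      case True
      then have "disc_qbeta \<beta> c d \<ge> 0" unfolding disc by simp
      then show ?thesis using cnt True by simp
    next
      case False
      have c2: "num_real_roots (qbeta \<beta> c d) = 2" using cnt False some by auto
      have "disc_qbeta \<beta> c d < 0"
      proof (cases "d^2 = 4*c")
        case True
        have "disc_qbeta \<beta> c d = \<beta>^2 * (-27*\<beta>^2*c^2)"
          unfolding disc_P using True by (simp add: algebra_simps power2_eq_square power3_eq_cube)
        moreover have "c > 0" using True d by (smt (verit) zero_less_power)
        ultimately show ?thesis using b by (simp add: mult_pos_neg)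
      next
        case F2: False
        then have gt: "d^2 > 4*c" using that by simp
        define t where "t = sqrt (d^2-4*c)"
        have t2: "t^2 = d^2 - 4*c" unfolding t_def using less_imp_le[OF gt] by simp
        have t0: "t \<ge> 0" unfolding t_def using less_imp_le[OF gt] by simp
        define y where "y = (-d-t)/2"
        have s0: "y^2+d*y+c = 0" unfolding y_def using t2 by (simp add: field_simps power2_eq_square)
        have "d*y+2*c < 0" unfolding y_def using gt mult_nonneg_nonneg[OF less_imp_le[OF d] t0]
          by (simp add: field_simps power2_eq_square)
        then have neg: "poly (qbeta \<beta> c d) y < 0" unfolding poly_qbeta s0 using b
          by (simp add: mult_pos_neg)
        show ?thesis
        proof (cases "DA \<ge> 0")
          case True
          then have "DB < 0" using False by simp
          with Rnz_mix[OF this neg] have "DA > 0" "R \<noteq> 0" by auto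
          moreover have "DA*DB < 0" using \<open>DA > 0\<close> \<open>DB < 0\<close> by (simp add: mult_pos_neg)
          ultimately show ?thesis unfolding disc by (simp add: mult_neg_pos)
        next
          case F3: False
          then have "DB \<ge> 0" using some by simp
          from F3 have "DA < 0" by simp
          with Rnz_mix'[OF this neg] have "DB > 0" "R \<noteq> 0" by auto
          moreover have "DA*DB < 0" using \<open>DB > 0\<close> \<open>DA < 0\<close> by (simp add: mult_neg_pos)
          ultimately show ?thesis unfolding disc by (simp add: mult_neg_pos)
        qed
      qed
      then show ?thesis using c2 by simp
    qed
  qed
  show ?thesis using part1 part2 by blast
qed

definition PP :: "real \<Rightarrow> real \<Rightarrow> real \<Rightarrow> real" where
  "PP \<beta> c x = (\<beta>/2-4*c)*x^3 + (48*c^2+12*c*\<beta>-27*\<beta>^2/16)*x^2 - (192*c^3+120*c^2*\<beta>)*x + 256*c^3*(c+\<beta>)"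

lemma disc_PP: "disc_qbeta \<beta> c d = \<beta>^2 * PP \<beta> c (d^2)"
  unfolding disc_P PP_def ..

lemma PP_cont: "continuous_on S (PP \<beta> c)"
  unfolding PP_def by (intro continuous_intros)

lemma ivt_up:
  assumes "a < b" "PP \<beta> c a < 0" "PP \<beta> c b > 0"
  shows "\<exists>x. a < x \<and> x < b \<and> PP \<beta> c x = 0"
proof -
  obtain x where "a \<le> x" "x \<le> b" "PP \<beta> c x = 0"
    using IVT'[of "PP \<beta> c" a 0 b] assms PP_cont by force
  moreover have "x \<noteq> a" "x \<noteq> b" using assms calculation by auto
  ultimately show ?thesis by (intro exI[of _ x]) auto
qed

lemma ivt_down:
  assumes "a < b" "PP \<beta> c a > 0" "PP \<beta> c b < 0"
  shows "\<exists>x. a < x \<and> x < b \<and> PP \<beta> c x = 0"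
proof -
  obtain x where "a \<le> x" "x \<le> b" "PP \<beta> c x = 0"
    using IVT2'[of "PP \<beta> c" b 0 a] assms PP_cont by force
  moreover have "x \<noteq> a" "x \<noteq> b" using assms calculation by auto
  ultimately show ?thesis by (intro exI[of _ x]) auto
qed

lemma PP_0: "c > 0 \<Longrightarrow> \<beta> > 0 \<Longrightarrow> PP \<beta> c 0 > 0"
  unfolding PP_def by simp

lemma PP_4c: "PP \<beta> c (4*c) = -27*\<beta>^2*c^2"
  unfolding PP_def power3_eq_cube power2_eq_square by (simp add: algebra_simps)

lemma PP_4b: "PP \<beta> c (4*\<beta>) = (\<beta>-4*c)^3*(5*\<beta>-4*c)"
  unfolding PP_def power3_eq_cube power2_eq_square by (simp add: algebra_simps)

lemma PP_deriv: "(PP \<beta> c has_real_derivative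
   (-27*x*\<beta>^2/8 - \<beta>*(4*c-x)*(3*x/2+30*c) - 12*c*(4*c-x)^2)) (at x)"
proof -
  have "(PP \<beta> c has_real_derivative
     (3*(\<beta>/2-4*c)*x^2 + 2*(48*c^2+12*c*\<beta>-27*\<beta>^2/16)*x - (192*c^3+120*c^2*\<beta>))) (at x)"
    unfolding PP_def[abs_def]
    by (auto intro!: derivative_eq_intros simp: algebra_simps power2_eq_square)
  moreover have "3*(\<beta>/2-4*c)*x^2 + 2*(48*c^2+12*c*\<beta>-27*\<beta>^2/16)*x - (192*c^3+120*c^2*\<beta>)
     = -27*x*\<beta>^2/8 - \<beta>*(4*c-x)*(3*x/2+30*c) - 12*c*(4*c-x)^2"
    unfolding power2_eq_square power3_eq_cube by (simp add: algebra_simps)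
  ultimately show ?thesis by simp
qed

lemma PP_deriv_neg:
  fixes c \<beta> x :: real
  assumes "c > 0" "\<beta> > 0" "0 \<le> x" "x \<le> 4*c"
  shows "-27*x*\<beta>^2/8 - \<beta>*(4*c-x)*(3*x/2+30*c) - 12*c*(4*c-x)^2 < 0"
proof -
  have a: "27*x*\<beta>^2/8 \<ge> 0" using assms by simp
  have b: "\<beta>*(4*c-x)*(3*x/2+30*c) \<ge> 0" using assms by simp
  have c: "12*c*(4*c-x)^2 \<ge> 0" using assms by simp
  show ?thesis
  proof (cases "x = 0")
    case True
    then have "12*c*(4*c-x)^2 > 0" using assms by simp
    then show ?thesis using a b by linarith
  next
    case False
    then have "27*x*\<beta>^2/8 > 0" using assms by simp
    then show ?thesis using b c by linarith
  qed
qed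

lemma PP_decr:
  assumes "c > 0" "\<beta> > 0" "0 \<le> a" "a < b" "b \<le> 4*c"
  shows "PP \<beta> c a > PP \<beta> c b"
proof (rule DERIV_neg_imp_decreasing[OF \<open>a < b\<close>])
  fix x assume x: "a \<le> x" "x \<le> b"
  show "\<exists>y. DERIV (PP \<beta> c) x :> y \<and> y < 0"
    apply (rule exI, rule conjI, rule PP_deriv)
    apply (rule PP_deriv_neg)
    using assms x by auto
qed

lemma left_part:
  assumes "c > 0" "\<beta> > 0"
  shows "\<exists>x1. 0 < x1 \<and> x1 < 4*c \<and> PP \<beta> c x1 = 0 \<and>
     (\<forall>x. 0 \<le> x \<and> x < 4*c \<longrightarrow> (PP \<beta> c x > 0 \<longleftrightarrow> x < x1))"
proof -
  have n4: "PP \<beta> c (4*c) < 0" unfolding PP_4c using assms by simp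
  obtain x1 where x1: "0 < x1" "x1 < 4*c" "PP \<beta> c x1 = 0"
    using ivt_down[of 0 "4*c" \<beta> c] PP_0[OF assms] n4 assms by auto
  have "PP \<beta> c x > 0 \<longleftrightarrow> x < x1" if "0 \<le> x" "x < 4*c" for x
  proof (cases x x1 rule: linorder_cases)
    case less
    then show ?thesis using PP_decr[OF assms that(1) less] x1 by simp
  next
    case equal
    then show ?thesis using x1 by simp
  next
    case greater
    then show ?thesis using PP_decr[OF assms _ greater] x1 that by simp
  qed
  with x1 show ?thesis by blast
qed

lemma cubic_fact:
  fixes a0 a1 a2 a3 x1 x2 x3 x :: real
  assumes r1: "a3*x1^3+a2*x1^2+a1*x1+a0 = 0" and r2: "a3*x2^3+a2*x2^2+a1*x2+a0 = 0"
    and r3: "a3*x3^3+a2*x3^2+a1*x3+a0 = 0" and d: "x1 \<noteq> x2" "x1 \<noteq> x3" "x2 \<noteq> x3"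
  shows "a3*x^3+a2*x^2+a1*x+a0 = a3*(x-x1)*(x-x2)*(x-x3)"
proof -
  define b2 where "b2 = a2 + a3*(x1+x2+x3)"
  define b1 where "b1 = a1 - a3*(x1*x2+x1*x3+x2*x3)"
  define b0 where "b0 = a0 + a3*x1*x2*x3"
  have g: "a3*y^3+a2*y^2+a1*y+a0 = a3*(y-x1)*(y-x2)*(y-x3) + (b2*y^2+b1*y+b0)" for y
    unfolding b2_def b1_def b0_def power2_eq_square power3_eq_cube by (simp add: algebra_simps)
  have z1: "b2*x1^2+b1*x1+b0 = 0" using g[of x1] r1 by simp
  have z2: "b2*x2^2+b1*x2+b0 = 0" using g[of x2] r2 by simp
  have z3: "b2*x3^2+b1*x3+b0 = 0" using g[of x3] r3 by simp
  have diff: "(b2*u^2+b1*u+b0) - (b2*w^2+b1*w+b0) = (u-w)*(b2*(u+w)+b1)" for u w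
    unfolding power2_eq_square by (simp add: algebra_simps)
  have h12: "b2*(x1+x2)+b1 = 0" using diff[of x1 x2] z1 z2 d by simp
  have h13: "b2*(x1+x3)+b1 = 0" using diff[of x1 x3] z1 z3 d by simp
  have "b2*(x2-x3) = (b2*(x1+x2)+b1) - (b2*(x1+x3)+b1)" by (simp add: algebra_simps)
  also have "\<dots> = 0" using h12 h13 by simp
  finally have "b2*(x2-x3) = 0" .
  then have B2: "b2 = 0" using d by simp
  then have B1: "b1 = 0" using h12 by simp
  then have B0: "b0 = 0" using z1 B2 by simp
  show ?thesis using g[of x] B2 B1 B0 by simp
qed

lemma quad_fact:
  fixes a0 a1 a2 x1 x2 x :: real
  assumes r1: "a2*x1^2+a1*x1+a0 = 0" and r2: "a2*x2^2+a1*x2+a0 = 0" and d: "x1 \<noteq> x2"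
  shows "a2*x^2+a1*x+a0 = a2*(x-x1)*(x-x2)"
proof -
  define b1 where "b1 = a1 + a2*(x1+x2)"
  define b0 where "b0 = a0 - a2*x1*x2"
  have g: "a2*y^2+a1*y+a0 = a2*(y-x1)*(y-x2) + (b1*y+b0)" for y
    unfolding b1_def b0_def power2_eq_square by (simp add: algebra_simps)
  have z1: "b1*x1+b0 = 0" using g[of x1] r1 by simp
  have z2: "b1*x2+b0 = 0" using g[of x2] r2 by simp
  have "b1*(x1-x2) = (b1*x1+b0) - (b1*x2+b0)" by (simp add: algebra_simps)
  also have "\<dots> = 0" using z1 z2 by simp
  finally have "b1*(x1-x2) = 0" .
  then have B1: "b1 = 0" using d by simp
  then have B0: "b0 = 0" using z1 by simp
  show ?thesis using g[of x] B1 B0 by simp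
qed

lemma cubic_large:
  fixes a0 a1 a2 a3 L :: real
  assumes a3: "a3 > 0"
  shows "\<exists>T>L. a3*T^3+a2*T^2+a1*T+a0 > 0" "\<exists>T<L. a3*T^3+a2*T^2+a1*T+a0 < 0"
proof -
  define S where "S = \<bar>a2\<bar> + \<bar>a1\<bar> + \<bar>a0\<bar>"
  define K where "K = 1 + \<bar>L\<bar> + S/a3"
  have S0: "S \<ge> 0" unfolding S_def by simp
  have K1: "K \<ge> 1" unfolding K_def using S0 a3 by simp
  have Sa: "S/a3 \<ge> 0" using S0 a3 by simp
  have KL: "K > L" "-K < L" unfolding K_def using Sa abs_ge_self[of L] abs_ge_minus_self[of L] by linarith+
  have aK: "a3*K > S" unfolding K_def using a3 S0 by (simp add: algebra_simps add_pos_nonneg)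
  have "K*1 \<le> K*K" using K1 by (intro mult_left_mono) simp_all
  then have KK1: "K \<le> K^2" by (simp add: power2_eq_square)
  have KK: "K \<le> K^2" "1 \<le> K^2" using KK1 K1 by simp_all
  have bnd: "\<bar>a2*y^2 + a1*y + a0\<bar> \<le> S*K^2" if "\<bar>y\<bar> = K" for y
  proof -
    have t1: "\<bar>a2*y^2 + a1*y + a0\<bar> \<le> \<bar>a2*y^2 + a1*y\<bar> + \<bar>a0\<bar>" by (rule abs_triangle_ineq)
    have t2: "\<bar>a2*y^2 + a1*y\<bar> \<le> \<bar>a2*y^2\<bar> + \<bar>a1*y\<bar>" by (rule abs_triangle_ineq)
    have yK: "y^2 = K^2" using that by (metis power2_abs)
    have t3: "\<bar>a2*y^2\<bar> = \<bar>a2\<bar>*K^2" using yK by (simp add: abs_mult)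
    have t4: "\<bar>a1*y\<bar> = \<bar>a1\<bar>*K" using that by (simp add: abs_mult)
    have "\<bar>a2*y^2 + a1*y + a0\<bar> \<le> \<bar>a2\<bar>*K^2 + \<bar>a1\<bar>*K + \<bar>a0\<bar>"
      using t1 t2 t3 t4 by linarith
    also have "\<dots> \<le> \<bar>a2\<bar>*K^2 + \<bar>a1\<bar>*K^2 + \<bar>a0\<bar>*K^2"
    proof -
      have u1: "\<bar>a1\<bar>*K \<le> \<bar>a1\<bar>*K^2" using KK by (intro mult_left_mono) auto
      have u0: "\<bar>a0\<bar>*1 \<le> \<bar>a0\<bar>*K^2" using KK by (intro mult_left_mono) auto
      show ?thesis using u1 u0 by linarith
    qed
    finally show ?thesis unfolding S_def by (simp add: algebra_simps)
  qed
  have cube: "a3*K^3 = K^2*(a3*K)" by (simp add: power2_eq_square power3_eq_cube)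
  have "K^2 > 0" using K1 by simp
  then have "K^2*S < K^2*(a3*K)" using aK by (intro mult_strict_left_mono) auto
  then have big: "a3*K^3 > S*K^2" unfolding cube by (simp add: mult.commute)
  have "-(S*K^2) \<le> a2*K^2+a1*K+a0" using bnd[of K] K1 by (simp add: abs_le_iff)
  then have "a3*K^3+a2*K^2+a1*K+a0 > 0" using big by linarith
  then show "\<exists>T>L. a3*T^3+a2*T^2+a1*T+a0 > 0" using KL by blast
  have "a3*(-K)^3+a2*(-K)^2+a1*(-K)+a0 = -(a3*K^3) + (a2*(-K)^2+a1*(-K)+a0)" by simp
  moreover have "a2*(-K)^2+a1*(-K)+a0 \<le> S*K^2" using bnd[of "-K"] K1 by (simp add: abs_le_iff)
  ultimately have "a3*(-K)^3+a2*(-K)^2+a1*(-K)+a0 < 0" using big by linarith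
  then show "\<exists>T<L. a3*T^3+a2*T^2+a1*T+a0 < 0" using KL by blast
qed

lemma right_i:
  fixes \<beta> c x :: real
  assumes c: "c > 0" and b: "\<beta> > 0" "\<beta> < 4*c" and x: "x \<ge> 4*c"
  shows "PP \<beta> c x < 0"
proof -
  define B where "B = (x-4*c)^2*(x/2+16*c)"
  have I: "27*x^2/4 * PP \<beta> c x = (x-4*c)^3*(x-16*c)^3/4 - (27*x^2*\<beta>/8 - B)^2"
    unfolding PP_def B_def power2_eq_square power3_eq_cube by (simp add: field_simps)
  have xpos: "27*x^2/4 > 0" using x c by simp
  consider "x = 4*c" | "4*c < x \<and> x < 16*c" | "x = 16*c" | "x > 16*c" using x by linarith
  then show ?thesis
  proof cases
    case 1 then show ?thesis using PP_4c[of \<beta> c] b c by simp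
  next
    case 2
    then have "(x-4*c)^3 > 0" "(x-16*c)^3 < 0" by simp_all
    then have "(x-4*c)^3*(x-16*c)^3 < 0" by (simp add: mult_pos_neg)
    then have "27*x^2/4 * PP \<beta> c x < 0" unfolding I
      using zero_le_power2[of "27*x^2*\<beta>/8 - B"] by linarith
    then show ?thesis using xpos by (simp add: mult_less_0_iff)
  next
    case 3
    have "PP \<beta> c (16*c) = -432*c^2*(\<beta>-4*c)^2"
      unfolding PP_def power2_eq_square power3_eq_cube by (simp add: algebra_simps)
    moreover have "c^2*(\<beta>-4*c)^2 > 0" using b c by simp
    ultimately show ?thesis using 3 by simp
  next
    case 4
    define v where "v = (x-16*c)*(x^2+13*c*x-32*c^2)/2"
    have E: "B - 27*x^2*c/2 = v" unfolding B_def v_def power2_eq_square by (simp add: field_simps)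
    have G: "(x^2+13*c*x-32*c^2)^2 = (x-4*c)^3*(x-16*c) + 27*c*x^2*(2*x-5*c)"
      unfolding power2_eq_square power3_eq_cube by (simp add: algebra_simps)
    have x2: "x^2 > 32*c^2"
    proof -
      have "x^2 > (16*c)^2" using 4 c by (intro power_strict_mono) auto
      moreover have "(16*c)^2 \<ge> 32*c^2" using c by (simp add: power2_eq_square)
      ultimately show ?thesis by linarith
    qed
    have q0: "x^2+13*c*x-32*c^2 > 0" 
    proof -
      have "13*c*x > 0" using c x by simp
      then show ?thesis using x2 by linarith
    qed
    have v0: "v > 0" unfolding v_def using 4 q0 by simp
    have "27*x^2*\<beta>/8 < 27*x^2*c/2" using b xpos by (simp add: field_simps)
    then have uv: "B - 27*x^2*\<beta>/8 > v" using E by linarith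
    then have "(B - 27*x^2*\<beta>/8)^2 > v^2" using v0 by (intro power_strict_mono) auto
    moreover have "v^2 \<ge> (x-4*c)^3*(x-16*c)^3/4"
    proof -
      have "v^2 = (x-16*c)^2*(x^2+13*c*x-32*c^2)^2/4" unfolding v_def by (simp add: power_mult_distrib power_divide)
      also have "\<dots> = ((x-4*c)^3*(x-16*c)^3 + (x-16*c)^2*(27*c*x^2*(2*x-5*c)))/4"
      proof -
        have "(x-16*c)^2*(x^2+13*c*x-32*c^2)^2 = (x-4*c)^3*(x-16*c)^3 + (x-16*c)^2*(27*c*x^2*(2*x-5*c))"
          by algebra
        then show ?thesis by simp
      qed
      also have "\<dots> = (x-4*c)^3*(x-16*c)^3/4 + (x-16*c)^2*(27*c*x^2*(2*x-5*c))/4"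
        by (simp add: add_divide_distrib)
      also have "\<dots> \<ge> (x-4*c)^3*(x-16*c)^3/4"
      proof -
        have "2*x-5*c > 0" using 4 c by simp
        then have "(x-16*c)^2*(27*c*x^2*(2*x-5*c)) \<ge> 0" using c by simp
        then show ?thesis by simp
      qed
      finally show ?thesis .
    qed
    moreover have "(27*x^2*\<beta>/8 - B)^2 = (B - 27*x^2*\<beta>/8)^2" by (simp add: power2_commute)
    ultimately have "27*x^2/4 * PP \<beta> c x < 0" unfolding I by linarith
    then show ?thesis using xpos by (simp add: mult_less_0_iff)
  qed
qed

lemma PP_poly: "PP \<beta> c x = (\<beta>/2-4*c)*x^3 + (48*c^2+12*c*\<beta>-27*\<beta>^2/16)*x^2 + (-(192*c^3+120*c^2*\<beta>))*x + 256*c^3*(c+\<beta>)"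
  unfolding PP_def by (simp add: algebra_simps)

lemma cnt_formula:
  fixes \<beta> c d :: real
  assumes "\<beta> > 0" "c \<ge> 0" "d > 0"
  shows "num_real_roots (qbeta \<beta> c d) = (if d^2 < 4*c then (if PP \<beta> c (d^2) > 0 then 0 else 2)
     else (if PP \<beta> c (d^2) \<ge> 0 then 4 else 2))"
proof -
  have b2: "\<beta>^2 > 0" using assms by simp
  have s1: "disc_qbeta \<beta> c d > 0 \<longleftrightarrow> PP \<beta> c (d^2) > 0" unfolding disc_PP using b2
    by (simp add: zero_less_mult_iff)
  have s2: "disc_qbeta \<beta> c d \<ge> 0 \<longleftrightarrow> PP \<beta> c (d^2) \<ge> 0" unfolding disc_PP using b2
    by (simp add: zero_le_mult_iff)
  show ?thesis using count_main[OF assms] s1 s2 by auto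
qed

lemma sqrt_lt_iff: "0 \<le> d \<Longrightarrow> (d < sqrt y \<longleftrightarrow> d^2 < (y::real))"
  by (metis abs_of_nonneg real_sqrt_abs real_sqrt_less_iff)

lemma sqrt_le_iff: "0 \<le> d \<Longrightarrow> (sqrt y \<le> d \<longleftrightarrow> y \<le> (d::real)^2)"
  by (metis abs_of_nonneg real_sqrt_abs real_sqrt_le_iff)

lemma le_sqrt_iff: "0 \<le> d \<Longrightarrow> (d \<le> sqrt y \<longleftrightarrow> d^2 \<le> (y::real))"
  by (metis abs_of_nonneg real_sqrt_abs real_sqrt_le_iff)

lemma eq_sqrt_iff: "0 \<le> d \<Longrightarrow> 0 \<le> y \<Longrightarrow> (d = sqrt y \<longleftrightarrow> d^2 = (y::real))"
  by auto

lemma sqrt_4: "sqrt (4*x) = 2 * sqrt x"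
  by (simp add: real_sqrt_mult)

lemma zero_set:
  assumes "\<beta> > 0" "\<And>x. x \<ge> 0 \<Longrightarrow> PP \<beta> c x = 0 \<longleftrightarrow> x \<in> S" "\<forall>x\<in>S. x \<ge> 0"
  shows "{d. d \<ge> 0 \<and> disc_qbeta \<beta> c d = 0} = sqrt ` S"
proof -
  have "d \<ge> 0 \<and> disc_qbeta \<beta> c d = 0 \<longleftrightarrow> d \<in> sqrt ` S" for d
  proof
    assume h: "d \<ge> 0 \<and> disc_qbeta \<beta> c d = 0"
    then have "PP \<beta> c (d^2) = 0" using assms(1) unfolding disc_PP by simp
    then have "d^2 \<in> S" using assms(2)[of "d^2"] by simp
    moreover have "d = sqrt (d^2)" using h by simp
    ultimately show "d \<in> sqrt ` S" by blast
  next
    assume "d \<in> sqrt ` S"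
    then obtain x where x: "x \<in> S" "d = sqrt x" by blast
    then have "x \<ge> 0" using assms(3) by blast
    then have "d^2 = x" "d \<ge> 0" using x by simp_all
    then show "d \<ge> 0 \<and> disc_qbeta \<beta> c d = 0" using assms(2)[of x] x \<open>x \<ge> 0\<close> unfolding disc_PP by simp
  qed
  then show ?thesis by blast
qed

lemma left_part2:
  assumes "c > 0" "\<beta> > 0"
  shows "\<exists>x1. 0 < x1 \<and> x1 < 4*c \<and> PP \<beta> c x1 = 0 \<and>
     (\<forall>x. 0 \<le> x \<and> x < 4*c \<longrightarrow> (PP \<beta> c x > 0 \<longleftrightarrow> x < x1)) \<and>
     (\<forall>x. 0 \<le> x \<and> x < 4*c \<longrightarrow> (PP \<beta> c x = 0 \<longleftrightarrow> x = x1))"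
proof -
  obtain x1 where x1: "0 < x1" "x1 < 4*c" "PP \<beta> c x1 = 0"
     "\<forall>x. 0 \<le> x \<and> x < 4*c \<longrightarrow> (PP \<beta> c x > 0 \<longleftrightarrow> x < x1)"
    using left_part[OF assms] by blast
  have "PP \<beta> c x = 0 \<longleftrightarrow> x = x1" if "0 \<le> x" "x < 4*c" for x
  proof (cases x x1 rule: linorder_cases)
    case less then show ?thesis using PP_decr[OF assms that(1) less] x1 by simp
  next
    case equal then show ?thesis using x1 by simp
  next
    case greater then show ?thesis using PP_decr[OF assms _ greater] x1 that by simp
  qed
  with x1 show ?thesis by blast
qed

lemma assemble_v:
  fixes \<beta> c x1 :: real and d2 d3 :: ereal
  assumes b: "\<beta> > 0" and c: "c > 0" and x1: "0 < x1" "x1 < 4*c"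
    and S1: "\<forall>x. 0 \<le> x \<and> x < 4*c \<longrightarrow> (PP \<beta> c x > 0 \<longleftrightarrow> x < x1)"
    and S2: "\<forall>d>0. (d2 \<le> ereal d \<and> ereal d \<le> d3) \<longleftrightarrow> (4*c \<le> d^2 \<and> PP \<beta> c (d^2) \<ge> 0)"
  shows "\<forall>d>0.
        (d < sqrt x1 \<longrightarrow> num_real_roots (qbeta \<beta> c d) = 0)
      \<and> (d2 \<le> ereal d \<and> ereal d \<le> d3 \<longrightarrow> num_real_roots (qbeta \<beta> c d) = 4)
      \<and> (\<not> d < sqrt x1 \<and> \<not> (d2 \<le> ereal d \<and> ereal d \<le> d3) \<longrightarrow>
           num_real_roots (qbeta \<beta> c d) = 2)"
proof (intro allI impI)
  fix d :: real assume d: "d > 0"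
  have F: "num_real_roots (qbeta \<beta> c d) = (if d^2 < 4*c then (if PP \<beta> c (d^2) > 0 then 0 else 2)
     else (if PP \<beta> c (d^2) \<ge> 0 then 4 else 2))" using cnt_formula[OF b _ d] c by simp
  have L: "d < sqrt x1 \<longleftrightarrow> d^2 < x1" using sqrt_lt_iff[of d x1] d by simp
  have S1': "PP \<beta> c (d^2) > 0 \<longleftrightarrow> d^2 < x1" if "d^2 < 4*c" using S1 that by simp
  have S2': "(d2 \<le> ereal d \<and> ereal d \<le> d3) \<longleftrightarrow> (4*c \<le> d^2 \<and> PP \<beta> c (d^2) \<ge> 0)" using S2 d by blast
  show "(d < sqrt x1 \<longrightarrow> num_real_roots (qbeta \<beta> c d) = 0)
      \<and> (d2 \<le> ereal d \<and> ereal d \<le> d3 \<longrightarrow> num_real_roots (qbeta \<beta> c d) = 4)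
      \<and> (\<not> d < sqrt x1 \<and> \<not> (d2 \<le> ereal d \<and> ereal d \<le> d3) \<longrightarrow>
           num_real_roots (qbeta \<beta> c d) = 2)"
  proof (cases "d^2 < 4*c")
    case True
    then show ?thesis using F L S1' S2' by auto
  next
    case False
    then show ?thesis using F L S2' x1 by auto
  qed
qed

definition GOAL :: "real \<Rightarrow> real \<Rightarrow> real \<Rightarrow> ereal \<Rightarrow> ereal \<Rightarrow> bool" where
  "GOAL c \<beta> d1 d2 d3 \<longleftrightarrow> (\<beta> < 4*c \<longrightarrow>
        {d. d \<ge> 0 \<and> disc_qbeta \<beta> c d = 0} = {d1}
      \<and> 0 < d1 \<and> d1 < 2 * sqrt c \<and> d2 = \<infinity> \<and> d3 = \<infinity>) \<and>
    (4*c \<le> \<beta> \<and> \<beta> < 8*c \<longrightarrow>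
      (\<exists>r2 r3. d2 = ereal r2 \<and> d3 = ereal r3
        \<and> {d. d \<ge> 0 \<and> disc_qbeta \<beta> c d = 0} = {d1, r2, r3}
        \<and> 0 < d1 \<and> d1 < 2 * sqrt c
        \<and> 2 * sqrt c < r2 \<and> r2 \<le> 2 * sqrt \<beta> \<and> 2 * sqrt \<beta> \<le> r3)) \<and>
    (8*c \<le> \<beta> \<and> 0 < c \<longrightarrow>
      (\<exists>r2. d2 = ereal r2 \<and> d3 = \<infinity>
        \<and> {d. d \<ge> 0 \<and> disc_qbeta \<beta> c d = 0} = {d1, r2}
        \<and> 0 < d1 \<and> d1 < 2 * sqrt c
        \<and> 2 * sqrt c < r2 \<and> r2 \<le> 2 * sqrt \<beta>)) \<and>
    (c = 0 \<longrightarrow>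
        {d. d \<ge> 0 \<and> disc_qbeta \<beta> c d = 0} = {0, sqrt (27*\<beta>/8)}
      \<and> d1 = 0 \<and> d2 = ereal (sqrt (27*\<beta>/8)) \<and> d3 = \<infinity>) \<and>
    (\<forall>d>0.
        (d < d1 \<longrightarrow> num_real_roots (qbeta \<beta> c d) = 0)
      \<and> (d2 \<le> ereal d \<and> ereal d \<le> d3 \<longrightarrow> num_real_roots (qbeta \<beta> c d) = 4)
      \<and> (\<not> d < d1 \<and> \<not> (d2 \<le> ereal d \<and> ereal d \<le> d3) \<longrightarrow>
           num_real_roots (qbeta \<beta> c d) = 2))"

lemma case_z:
  fixes \<beta> :: real
  assumes b: "\<beta> > 0"
  shows "\<exists>d1 d2 d3. GOAL 0 \<beta> d1 d2 d3"
proof -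
  have PP0: "PP \<beta> 0 x = x^2 * (\<beta>/2*x - 27*\<beta>^2/16)" for x
    unfolding PP_def power2_eq_square power3_eq_cube by (simp add: algebra_simps)
  have PP1: "PP \<beta> 0 x = \<beta>/2 * x^2 * (x - 27*\<beta>/8)" for x
    unfolding PP_def power2_eq_square power3_eq_cube by (simp add: field_simps)
  have Z0: "PP \<beta> 0 x = 0 \<longleftrightarrow> x \<in> {0, 27*\<beta>/8}" if "x \<ge> 0" for x
    unfolding PP1 using b by auto
  have Z: "{d. d \<ge> 0 \<and> disc_qbeta \<beta> 0 d = 0} = {0, sqrt (27*\<beta>/8)}"
    using zero_set[of \<beta> 0 "{0, 27*\<beta>/8}"] Z0 b by simp
  have V: "num_real_roots (qbeta \<beta> 0 d) = (if sqrt (27*\<beta>/8) \<le> d then 4 else 2)" if d: "d > 0" for d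
  proof -
    have F: "num_real_roots (qbeta \<beta> 0 d) = (if PP \<beta> 0 (d^2) \<ge> 0 then 4 else 2)"
      using cnt_formula[OF b _ d] by simp
    have pos: "\<beta>/2 * (d^2)^2 > 0" using b d by simp
    have "PP \<beta> 0 (d^2) \<ge> 0 \<longleftrightarrow> d^2 - 27*\<beta>/8 \<ge> 0"
      unfolding PP1 using pos b by (simp add: zero_le_mult_iff)
    also have "\<dots> \<longleftrightarrow> 27*\<beta>/8 \<le> d^2" by simp
    also have "\<dots> \<longleftrightarrow> sqrt (27*\<beta>/8) \<le> d" using sqrt_le_iff[of d] d by simp
    finally show ?thesis using F by simp
  qed
  have "GOAL 0 \<beta> 0 (ereal (sqrt (27*\<beta>/8))) \<infinity>"
    unfolding GOAL_def using b Z V by auto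
  then show ?thesis by blast
qed

lemma case_i:
  fixes \<beta> c :: real
  assumes c: "c > 0" and b: "\<beta> > 0" "\<beta> < 4*c"
  shows "\<exists>d1 d2 d3. GOAL c \<beta> d1 d2 d3"
proof -
  obtain x1 where x1: "0 < x1" "x1 < 4*c" "PP \<beta> c x1 = 0"
     and S1: "\<forall>x. 0 \<le> x \<and> x < 4*c \<longrightarrow> (PP \<beta> c x > 0 \<longleftrightarrow> x < x1)"
     and E1: "\<forall>x. 0 \<le> x \<and> x < 4*c \<longrightarrow> (PP \<beta> c x = 0 \<longleftrightarrow> x = x1)"
    using left_part2[OF c b(1)] by blast
  have Z0: "PP \<beta> c x = 0 \<longleftrightarrow> x \<in> {x1}" if "x \<ge> 0" for x
  proof (cases "x < 4*c")
    case True then show ?thesis using E1 that by simp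
  next
    case False then show ?thesis using right_i[OF c b, of x] x1 by auto
  qed
  have Z: "{d. d \<ge> 0 \<and> disc_qbeta \<beta> c d = 0} = {sqrt x1}"
    using zero_set[of \<beta> c "{x1}"] Z0 b x1 by simp
  have S2: "\<forall>d>0. ((\<infinity>::ereal) \<le> ereal d \<and> ereal d \<le> \<infinity>) \<longleftrightarrow> (4*c \<le> d^2 \<and> PP \<beta> c (d^2) \<ge> 0)"
  proof -
    have "\<not> (4*c \<le> d^2 \<and> PP \<beta> c (d^2) \<ge> 0)" for d using right_i[OF c b, of "d^2"] by linarith
    then show ?thesis by simp
  qed
  note V = assemble_v[OF b(1) c x1(1,2) S1 S2]
  have d1: "0 < sqrt x1" "sqrt x1 < 2 * sqrt c" using x1 by (simp_all add: sqrt_4[symmetric])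
  have "GOAL c \<beta> (sqrt x1) \<infinity> \<infinity>"
    unfolding GOAL_def using b c Z V d1 by auto
  then show ?thesis by blast
qed

lemma sqrt_16: "sqrt (16*c) = 4 * sqrt c"
proof -
  have "sqrt (16*c) = sqrt 16 * sqrt c" by (simp add: real_sqrt_mult)
  moreover have "sqrt (16::real) = 4" by (simp add: real_sqrt_unique)
  ultimately show ?thesis by simp
qed

lemma case_iia:
  fixes \<beta> c :: real
  assumes c: "c > 0" and b: "\<beta> = 4*c"
  shows "\<exists>d1 d2 d3. GOAL c \<beta> d1 d2 d3"
proof -
  have bpos: "\<beta> > 0" using b c by simp
  have PPf: "PP \<beta> c x = -2*c*(x-16*c)^2*(x - 5*c/2)" for x
    unfolding b PP_def power2_eq_square power3_eq_cube by (simp add: field_simps)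
  obtain x1 where x1: "0 < x1" "x1 < 4*c" "PP \<beta> c x1 = 0"
     and S1: "\<forall>x. 0 \<le> x \<and> x < 4*c \<longrightarrow> (PP \<beta> c x > 0 \<longleftrightarrow> x < x1)"
     and E1: "\<forall>x. 0 \<le> x \<and> x < 4*c \<longrightarrow> (PP \<beta> c x = 0 \<longleftrightarrow> x = x1)"
    using left_part2[OF c bpos] by blast
  have "PP \<beta> c (5*c/2) = 0" unfolding PPf by simp
  then have x1v: "x1 = 5*c/2" using E1 c by auto
  have Z0: "PP \<beta> c x = 0 \<longleftrightarrow> x \<in> {x1, 16*c}" if "x \<ge> 0" for x
    unfolding PPf x1v using c by auto
  define r where "r = sqrt (16*c)"
  have Z: "{d. d \<ge> 0 \<and> disc_qbeta \<beta> c d = 0} = {sqrt x1, r, r}"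
    using zero_set[of \<beta> c "{x1, 16*c}"] Z0 bpos x1 c unfolding r_def by simp
  have S2: "\<forall>d>0. (ereal r \<le> ereal d \<and> ereal d \<le> ereal r) \<longleftrightarrow> (4*c \<le> d^2 \<and> PP \<beta> c (d^2) \<ge> 0)"
  proof (intro allI impI)
    fix d :: real assume d: "d > 0"
    have "(ereal r \<le> ereal d \<and> ereal d \<le> ereal r) \<longleftrightarrow> d = r" by auto
    also have "\<dots> \<longleftrightarrow> d^2 = 16*c" unfolding r_def using eq_sqrt_iff[of d "16*c"] d c by simp
    also have "\<dots> \<longleftrightarrow> (4*c \<le> d^2 \<and> PP \<beta> c (d^2) \<ge> 0)"
    proof
      assume "d^2 = 16*c" then show "4*c \<le> d^2 \<and> PP \<beta> c (d^2) \<ge> 0" unfolding PPf using c by simp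
    next
      assume h: "4*c \<le> d^2 \<and> PP \<beta> c (d^2) \<ge> 0"
      have pos: "2*c*(d^2 - 5*c/2) > 0" using h c by simp
      have "PP \<beta> c (d^2) = -((d^2-16*c)^2 * (2*c*(d^2 - 5*c/2)))" unfolding PPf by (simp add: algebra_simps)
      then have le: "(d^2-16*c)^2 * (2*c*(d^2 - 5*c/2)) \<le> 0" using h by linarith
      show "d^2 = 16*c"
      proof (rule ccontr)
        assume "d^2 \<noteq> 16*c"
        then have "(d^2-16*c)^2 > 0" by simp
        then have "(d^2-16*c)^2 * (2*c*(d^2 - 5*c/2)) > 0" using pos by (rule mult_pos_pos)
        then show False using le by linarith
      qed
    qed
    finally show "(ereal r \<le> ereal d \<and> ereal d \<le> ereal r) \<longleftrightarrow> (4*c \<le> d^2 \<and> PP \<beta> c (d^2) \<ge> 0)" .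
  qed
  note V = assemble_v[OF bpos c x1(1,2) S1 S2]
  have d1: "0 < sqrt x1" "sqrt x1 < 2 * sqrt c" using x1 by (simp_all add: sqrt_4[symmetric])
  have rv: "r = 4 * sqrt c" unfolding r_def by (rule sqrt_16)
  have sb: "2 * sqrt \<beta> = 4 * sqrt c" unfolding b sqrt_4 by simp
  have rc: "2 * sqrt c < r" using c unfolding rv by simp
  have C2: "\<exists>r2 r3. ereal r = ereal r2 \<and> ereal r = ereal r3
        \<and> {d. d \<ge> 0 \<and> disc_qbeta \<beta> c d = 0} = {sqrt x1, r2, r3}
        \<and> 0 < sqrt x1 \<and> sqrt x1 < 2 * sqrt c
        \<and> 2 * sqrt c < r2 \<and> r2 \<le> 2 * sqrt \<beta> \<and> 2 * sqrt \<beta> \<le> r3"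
    by (rule exI[of _ r], rule exI[of _ r]) (use Z d1 rc sb rv in simp)
  have "GOAL c \<beta> (sqrt x1) (ereal r) (ereal r)"
    unfolding GOAL_def using b c C2 V by auto
  then show ?thesis by blast
qed

lemma case_iiia:
  fixes \<beta> c :: real
  assumes c: "c > 0" and b: "\<beta> = 8*c"
  shows "\<exists>d1 d2 d3. GOAL c \<beta> d1 d2 d3"
proof -
  have bpos: "\<beta> > 0" using b c by simp
  have PPf: "PP \<beta> c x = (36*c^2)*x^2 + (-1152*c^3)*x + 2304*c^4" for x
    unfolding b PP_def power2_eq_square power3_eq_cube by (simp add: field_simps power4_eq_xxxx)
  obtain x1 where x1: "0 < x1" "x1 < 4*c" "PP \<beta> c x1 = 0"
     and S1: "\<forall>x. 0 \<le> x \<and> x < 4*c \<longrightarrow> (PP \<beta> c x > 0 \<longleftrightarrow> x < x1)"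
     and E1: "\<forall>x. 0 \<le> x \<and> x < 4*c \<longrightarrow> (PP \<beta> c x = 0 \<longleftrightarrow> x = x1)"
    using left_part2[OF c bpos] by blast
  have n4: "PP \<beta> c (4*c) < 0" unfolding PP_4c using c bpos by simp
  have p4: "PP \<beta> c (4*\<beta>) > 0" unfolding PP_4b using c b by simp
  obtain x2 where x2: "4*c < x2" "x2 < 4*\<beta>" "PP \<beta> c x2 = 0"
    using ivt_up[of "4*c" "4*\<beta>" \<beta> c] n4 p4 b c by auto
  have fac: "PP \<beta> c x = (36*c^2)*(x-x1)*(x-x2)" for x
    unfolding PPf by (rule quad_fact) (use x1 x2 PPf in auto)
  have Z0: "PP \<beta> c x = 0 \<longleftrightarrow> x \<in> {x1, x2}" if "x \<ge> 0" for x
    unfolding fac using c by auto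
  have Z: "{d. d \<ge> 0 \<and> disc_qbeta \<beta> c d = 0} = {sqrt x1, sqrt x2}"
    using zero_set[of \<beta> c "{x1, x2}"] Z0 bpos x1 x2 c by simp
  have S2: "\<forall>d>0. (ereal (sqrt x2) \<le> ereal d \<and> ereal d \<le> \<infinity>) \<longleftrightarrow> (4*c \<le> d^2 \<and> PP \<beta> c (d^2) \<ge> 0)"
  proof (intro allI impI)
    fix d :: real assume d: "d > 0"
    have "(ereal (sqrt x2) \<le> ereal d \<and> ereal d \<le> \<infinity>) \<longleftrightarrow> x2 \<le> d^2" using sqrt_le_iff[of d x2] d by simp
    also have "\<dots> \<longleftrightarrow> (4*c \<le> d^2 \<and> PP \<beta> c (d^2) \<ge> 0)"
    proof
      assume h: "x2 \<le> d^2"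
      then have "36*c^2*(d^2-x1) \<ge> 0" "d^2 - x2 \<ge> 0" using x1 x2 c by simp_all
      then have "(36*c^2*(d^2-x1))*(d^2-x2) \<ge> 0" by (rule mult_nonneg_nonneg)
      moreover have "PP \<beta> c (d^2) = (36*c^2*(d^2-x1))*(d^2-x2)" unfolding fac by (simp add: algebra_simps)
      ultimately show "4*c \<le> d^2 \<and> PP \<beta> c (d^2) \<ge> 0" using h x2 by simp
    next
      assume h: "4*c \<le> d^2 \<and> PP \<beta> c (d^2) \<ge> 0"
      have pos: "36*c^2*(d^2-x1) > 0" using h x1 c by simp
      have "PP \<beta> c (d^2) = (36*c^2*(d^2-x1))*(d^2-x2)" unfolding fac by (simp add: algebra_simps)
      then have "(36*c^2*(d^2-x1))*(d^2-x2) \<ge> 0" using h by linarith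
      then have "d^2 - x2 \<ge> 0" using pos by (simp add: zero_le_mult_iff)
      then show "x2 \<le> d^2" by simp
    qed
    finally show "(ereal (sqrt x2) \<le> ereal d \<and> ereal d \<le> \<infinity>) \<longleftrightarrow> (4*c \<le> d^2 \<and> PP \<beta> c (d^2) \<ge> 0)" .
  qed
  note V = assemble_v[OF bpos c x1(1,2) S1 S2]
  have d1: "0 < sqrt x1" "sqrt x1 < 2 * sqrt c" using x1 by (simp_all add: sqrt_4[symmetric])
  have r2: "2 * sqrt c < sqrt x2" "sqrt x2 \<le> 2 * sqrt \<beta>" using x2 by (simp_all add: sqrt_4[symmetric])
  have C3: "\<exists>r2. ereal (sqrt x2) = ereal r2 \<and> (\<infinity>::ereal) = \<infinity>
        \<and> {d. d \<ge> 0 \<and> disc_qbeta \<beta> c d = 0} = {sqrt x1, r2}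
        \<and> 0 < sqrt x1 \<and> sqrt x1 < 2 * sqrt c
        \<and> 2 * sqrt c < r2 \<and> r2 \<le> 2 * sqrt \<beta>"
    by (rule exI[of _ "sqrt x2"]) (use Z d1 r2 in simp)
  have "GOAL c \<beta> (sqrt x1) (ereal (sqrt x2)) \<infinity>"
    unfolding GOAL_def using b c C3 V by auto
  then show ?thesis by blast
qed

lemma case_iib:
  fixes \<beta> c :: real
  assumes c: "c > 0" and b: "4*c < \<beta>" "\<beta> < 8*c"
  shows "\<exists>d1 d2 d3. GOAL c \<beta> d1 d2 d3"
proof -
  have bpos: "\<beta> > 0" using b c by simp
  define A3 where "A3 = \<beta>/2-4*c"
  define A2 where "A2 = 48*c^2+12*c*\<beta>-27*\<beta>^2/16"
  define A1 where "A1 = -(192*c^3+120*c^2*\<beta>)"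
  define A0 where "A0 = 256*c^3*(c+\<beta>)"
  have PPp: "PP \<beta> c x = A3*x^3+A2*x^2+A1*x+A0" for x
    unfolding A3_def A2_def A1_def A0_def by (rule PP_poly)
  have A3n: "A3 < 0" unfolding A3_def using b by simp
  obtain x1 where x1: "0 < x1" "x1 < 4*c" "PP \<beta> c x1 = 0"
     and S1: "\<forall>x. 0 \<le> x \<and> x < 4*c \<longrightarrow> (PP \<beta> c x > 0 \<longleftrightarrow> x < x1)"
    using left_part2[OF c bpos] by blast
  have n4: "PP \<beta> c (4*c) < 0" unfolding PP_4c using c bpos by simp
  have p4: "PP \<beta> c (4*\<beta>) > 0" unfolding PP_4b using c b by simp
  obtain x2 where x2: "4*c < x2" "x2 < 4*\<beta>" "PP \<beta> c x2 = 0"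
    using ivt_up[of "4*c" "4*\<beta>" \<beta> c] n4 p4 b c by auto
  obtain T where T: "T > 4*\<beta>" "(-A3)*T^3+(-A2)*T^2+(-A1)*T+(-A0) > 0"
    using cubic_large(1)[of "-A3" "4*\<beta>" "-A2" "-A1" "-A0"] A3n by auto
  have nT: "PP \<beta> c T < 0" using T(2) unfolding PPp by simp
  obtain x3 where x3: "4*\<beta> < x3" "x3 < T" "PP \<beta> c x3 = 0"
    using ivt_down[of "4*\<beta>" T \<beta> c] nT p4 T by auto
  have fac: "PP \<beta> c x = A3*(x-x1)*(x-x2)*(x-x3)" for x
    unfolding PPp by (rule cubic_fact) (use x1 x2 x3 PPp in auto)
  have Z0: "PP \<beta> c x = 0 \<longleftrightarrow> x \<in> {x1, x2, x3}" if "x \<ge> 0" for x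
    unfolding fac using A3n by auto
  have Z: "{d. d \<ge> 0 \<and> disc_qbeta \<beta> c d = 0} = {sqrt x1, sqrt x2, sqrt x3}"
    using zero_set[of \<beta> c "{x1, x2, x3}"] Z0 bpos x1 x2 x3 c by simp
  have key: "PP \<beta> c x \<ge> 0 \<longleftrightarrow> x2 \<le> x \<and> x \<le> x3" if "4*c \<le> x" for x
  proof -
    have neg: "A3*(x-x1) < 0" using A3n that x1 by (simp add: mult_neg_pos)
    have e: "PP \<beta> c x = (A3*(x-x1))*((x-x2)*(x-x3))" unfolding fac by (simp add: algebra_simps)
    show ?thesis
    proof
      assume h: "PP \<beta> c x \<ge> 0"
      have "(x-x2)*(x-x3) \<le> 0"
      proof (rule ccontr)
        assume "\<not> (x-x2)*(x-x3) \<le> 0"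
        then have "(A3*(x-x1))*((x-x2)*(x-x3)) < 0" using neg by (simp add: mult_neg_pos)
        then show False using h e by simp
      qed
      then show "x2 \<le> x \<and> x \<le> x3" using x2 x3 by (auto simp: mult_le_0_iff)
    next
      assume "x2 \<le> x \<and> x \<le> x3"
      then have "(x-x2)*(x-x3) \<le> 0" by (simp add: mult_nonneg_nonpos)
      then have "(A3*(x-x1))*((x-x2)*(x-x3)) \<ge> 0" using neg by (simp add: mult_nonpos_nonpos)
      then show "PP \<beta> c x \<ge> 0" using e by simp
    qed
  qed
  have S2: "\<forall>d>0. (ereal (sqrt x2) \<le> ereal d \<and> ereal d \<le> ereal (sqrt x3)) \<longleftrightarrow> (4*c \<le> d^2 \<and> PP \<beta> c (d^2) \<ge> 0)"
  proof (intro allI impI)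
    fix d :: real assume d: "d > 0"
    have "(ereal (sqrt x2) \<le> ereal d \<and> ereal d \<le> ereal (sqrt x3)) \<longleftrightarrow> x2 \<le> d^2 \<and> d^2 \<le> x3"
      using sqrt_le_iff[of d x2] le_sqrt_iff[of d x3] d by simp
    also have "\<dots> \<longleftrightarrow> (4*c \<le> d^2 \<and> PP \<beta> c (d^2) \<ge> 0)" using key[of "d^2"] x2 by auto
    finally show "(ereal (sqrt x2) \<le> ereal d \<and> ereal d \<le> ereal (sqrt x3)) \<longleftrightarrow> (4*c \<le> d^2 \<and> PP \<beta> c (d^2) \<ge> 0)" .
  qed
  note V = assemble_v[OF bpos c x1(1,2) S1 S2]
  have d1: "0 < sqrt x1" "sqrt x1 < 2 * sqrt c" using x1 by (simp_all add: sqrt_4[symmetric])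
  have r2: "2 * sqrt c < sqrt x2" "sqrt x2 \<le> 2 * sqrt \<beta>" using x2 by (simp_all add: sqrt_4[symmetric])
  have r3: "2 * sqrt \<beta> \<le> sqrt x3" using x3 by (simp add: sqrt_4[symmetric])
  have C2: "\<exists>r2 r3. ereal (sqrt x2) = ereal r2 \<and> ereal (sqrt x3) = ereal r3
        \<and> {d. d \<ge> 0 \<and> disc_qbeta \<beta> c d = 0} = {sqrt x1, r2, r3}
        \<and> 0 < sqrt x1 \<and> sqrt x1 < 2 * sqrt c
        \<and> 2 * sqrt c < r2 \<and> r2 \<le> 2 * sqrt \<beta> \<and> 2 * sqrt \<beta> \<le> r3"
    by (rule exI[of _ "sqrt x2"], rule exI[of _ "sqrt x3"]) (use Z d1 r2 r3 in simp)
  have "GOAL c \<beta> (sqrt x1) (ereal (sqrt x2)) (ereal (sqrt x3))"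
    unfolding GOAL_def using b c C2 V by auto
  then show ?thesis by blast
qed

lemma case_iiib:
  fixes \<beta> c :: real
  assumes c: "c > 0" and b: "8*c < \<beta>"
  shows "\<exists>d1 d2 d3. GOAL c \<beta> d1 d2 d3"
proof -
  have bpos: "\<beta> > 0" using b c by simp
  define A3 where "A3 = \<beta>/2-4*c"
  define A2 where "A2 = 48*c^2+12*c*\<beta>-27*\<beta>^2/16"
  define A1 where "A1 = -(192*c^3+120*c^2*\<beta>)"
  define A0 where "A0 = 256*c^3*(c+\<beta>)"
  have PPp: "PP \<beta> c x = A3*x^3+A2*x^2+A1*x+A0" for x
    unfolding A3_def A2_def A1_def A0_def by (rule PP_poly)
  have A3p: "A3 > 0" unfolding A3_def using b by simp
  obtain x1 where x1: "0 < x1" "x1 < 4*c" "PP \<beta> c x1 = 0"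
     and S1: "\<forall>x. 0 \<le> x \<and> x < 4*c \<longrightarrow> (PP \<beta> c x > 0 \<longleftrightarrow> x < x1)"
    using left_part2[OF c bpos] by blast
  have n4: "PP \<beta> c (4*c) < 0" unfolding PP_4c using c bpos by simp
  have p4: "PP \<beta> c (4*\<beta>) > 0" unfolding PP_4b using c b by simp
  obtain x2 where x2: "4*c < x2" "x2 < 4*\<beta>" "PP \<beta> c x2 = 0"
    using ivt_up[of "4*c" "4*\<beta>" \<beta> c] n4 p4 b c by auto
  obtain T where T: "T < 0" "A3*T^3+A2*T^2+A1*T+A0 < 0"
    using cubic_large(2)[of A3 0 A2 A1 A0] A3p by auto
  have nT: "PP \<beta> c T < 0" using T(2) unfolding PPp by simp
  obtain x0 where x0: "T < x0" "x0 < 0" "PP \<beta> c x0 = 0"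
    using ivt_up[of T 0 \<beta> c] nT PP_0[OF c bpos] T by auto
  have fac: "PP \<beta> c x = A3*(x-x0)*(x-x1)*(x-x2)" for x
    unfolding PPp by (rule cubic_fact) (use x0 x1 x2 PPp in auto)
  have Z0: "PP \<beta> c x = 0 \<longleftrightarrow> x \<in> {x1, x2}" if "x \<ge> 0" for x
    unfolding fac using A3p x0 that by auto
  have Z: "{d. d \<ge> 0 \<and> disc_qbeta \<beta> c d = 0} = {sqrt x1, sqrt x2}"
    using zero_set[of \<beta> c "{x1, x2}"] Z0 bpos x1 x2 c by simp
  have key: "PP \<beta> c x \<ge> 0 \<longleftrightarrow> x2 \<le> x" if "4*c \<le> x" for x
  proof -
    define P where "P = A3*(x-x0)*(x-x1)"
    have pos: "P > 0" unfolding P_def using A3p that x1 x0 by simp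
    have e: "PP \<beta> c x = P*(x-x2)" unfolding fac P_def by (simp add: algebra_simps)
    show ?thesis unfolding e using pos by (simp add: zero_le_mult_iff)
  qed
  have S2: "\<forall>d>0. (ereal (sqrt x2) \<le> ereal d \<and> ereal d \<le> \<infinity>) \<longleftrightarrow> (4*c \<le> d^2 \<and> PP \<beta> c (d^2) \<ge> 0)"
  proof (intro allI impI)
    fix d :: real assume d: "d > 0"
    have "(ereal (sqrt x2) \<le> ereal d \<and> ereal d \<le> \<infinity>) \<longleftrightarrow> x2 \<le> d^2"
      using sqrt_le_iff[of d x2] d by simp
    also have "\<dots> \<longleftrightarrow> (4*c \<le> d^2 \<and> PP \<beta> c (d^2) \<ge> 0)" using key[of "d^2"] x2 by auto
    finally show "(ereal (sqrt x2) \<le> ereal d \<and> ereal d \<le> \<infinity>) \<longleftrightarrow> (4*c \<le> d^2 \<and> PP \<beta> c (d^2) \<ge> 0)" .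
  qed
  note V = assemble_v[OF bpos c x1(1,2) S1 S2]
  have d1: "0 < sqrt x1" "sqrt x1 < 2 * sqrt c" using x1 by (simp_all add: sqrt_4[symmetric])
  have r2: "2 * sqrt c < sqrt x2" "sqrt x2 \<le> 2 * sqrt \<beta>" using x2 by (simp_all add: sqrt_4[symmetric])
  have C3: "\<exists>r2. ereal (sqrt x2) = ereal r2 \<and> (\<infinity>::ereal) = \<infinity>
        \<and> {d. d \<ge> 0 \<and> disc_qbeta \<beta> c d = 0} = {sqrt x1, r2}
        \<and> 0 < sqrt x1 \<and> sqrt x1 < 2 * sqrt c
        \<and> 2 * sqrt c < r2 \<and> r2 \<le> 2 * sqrt \<beta>"
    by (rule exI[of _ "sqrt x2"]) (use Z d1 r2 in simp)
  have "GOAL c \<beta> (sqrt x1) (ereal (sqrt x2)) \<infinity>"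
    unfolding GOAL_def using b c C3 V by auto
  then show ?thesis by blast
qed

theorem lemma3p4:
  fixes c \<beta> :: real
  assumes "c \<ge> 0" and "\<beta> > 0"
  shows "\<exists>(d1::real) (d2::ereal) (d3::ereal).
    (\<beta> < 4*c \<longrightarrow>
        {d. d \<ge> 0 \<and> disc_qbeta \<beta> c d = 0} = {d1}
      \<and> 0 < d1 \<and> d1 < 2 * sqrt c \<and> d2 = \<infinity> \<and> d3 = \<infinity>) \<and>
    (4*c \<le> \<beta> \<and> \<beta> < 8*c \<longrightarrow>
      (\<exists>r2 r3. d2 = ereal r2 \<and> d3 = ereal r3
        \<and> {d. d \<ge> 0 \<and> disc_qbeta \<beta> c d = 0} = {d1, r2, r3}
        \<and> 0 < d1 \<and> d1 < 2 * sqrt c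
        \<and> 2 * sqrt c < r2 \<and> r2 \<le> 2 * sqrt \<beta> \<and> 2 * sqrt \<beta> \<le> r3)) \<and>
    (8*c \<le> \<beta> \<and> 0 < c \<longrightarrow>
      (\<exists>r2. d2 = ereal r2 \<and> d3 = \<infinity>
        \<and> {d. d \<ge> 0 \<and> disc_qbeta \<beta> c d = 0} = {d1, r2}
        \<and> 0 < d1 \<and> d1 < 2 * sqrt c
        \<and> 2 * sqrt c < r2 \<and> r2 \<le> 2 * sqrt \<beta>)) \<and>
    (c = 0 \<longrightarrow>
        {d. d \<ge> 0 \<and> disc_qbeta \<beta> c d = 0} = {0, sqrt (27*\<beta>/8)}
      \<and> d1 = 0 \<and> d2 = ereal (sqrt (27*\<beta>/8)) \<and> d3 = \<infinity>) \<and>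
    (\<forall>d>0.
        (d < d1 \<longrightarrow> num_real_roots (qbeta \<beta> c d) = 0)
      \<and> (d2 \<le> ereal d \<and> ereal d \<le> d3 \<longrightarrow> num_real_roots (qbeta \<beta> c d) = 4)
      \<and> (\<not> d < d1 \<and> \<not> (d2 \<le> ereal d \<and> ereal d \<le> d3) \<longrightarrow>
           num_real_roots (qbeta \<beta> c d) = 2))"
proof -
  have "\<exists>d1 d2 d3. GOAL c \<beta> d1 d2 d3"
  proof -
    consider (z) "c = 0" | (i) "c > 0 \<and> \<beta> < 4*c" | (iia) "c > 0 \<and> \<beta> = 4*c"
      | (iib) "c > 0 \<and> 4*c < \<beta> \<and> \<beta> < 8*c" | (iiia) "c > 0 \<and> \<beta> = 8*c" | (iiib) "c > 0 \<and> 8*c < \<beta>"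
      using assms by linarith
    then show ?thesis
    proof cases
      case z then show ?thesis using case_z[OF assms(2)] by simp
    next
      case i then show ?thesis using case_i[of c \<beta>] assms by simp
    next
      case iia then show ?thesis using case_iia[of c \<beta>] by simp
    next
      case iib then show ?thesis using case_iib[of c \<beta>] by simp
    next
      case iiia then show ?thesis using case_iiia[of c \<beta>] by simp
    next
      case iiib then show ?thesis using case_iiib[of c \<beta>] by simp
    qed
  qed
  then show ?thesis unfolding GOAL_def .
qed

end
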